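(* The following are equivalent: (i) $\sup_{d\in\mathbb N} n^{X_d}(\varepsilon)=\infty$ for every $\varepsilon\in(0,1)$; (ii) $\inf_{d\in\mathbb N}\bar\lambda^{X_d}_1=0$.
   Context: For each $d\in\mathbb N$, $X_d$ is a random element of a separable Hilbert space $H_d$ with $\mathbb E X_d=0$ and $\mathbb E\|X_d\|_{H_d}^2<\infty$. For a centered Hilbert-space random element $Z$ with finite second moment, $\lambda^Z_1\ge\lambda^Z_2\ge\dots\ge 0$ denote the eigenvalues of its covariance operator $K^Z$ listed with multiplicity (padded with zeros if there are finitely many), $\Lambda^Z=\sum_k\lambda^Z_k=\mathbb E\|Z\|^2$, and $\bar\lambda^Z_k=\lambda^Z_k/\Lambda^Z$. It is assumed that $\lambda^{X_d}_1>0$ for all $d$. The average case approximation complexity is $n^{X_d}(\varepsilon)=\min\{n\in\mathbb N: e^{X_d}(n)\le \varepsilon\, e^{X_d}(0)\}$ for $\varepsilon\in(0,1)$, where $e^{X_d}(0)=(\mathbb E\|X_d\|^2)^{1/2}$ and $e^{X_d}(n)$ is the infimum of $(\mathbb E\|X_d-\sum_{m=1}^n l_m(X_d)\psi_m\|^2)^{1/2}$ over all $\psi_m\in H_d$, $l_m\in H_d^*$; equivalently $n^{X_d}(\varepsilon)=\min\{n\in\mathbb N:\ \sum_{k>n}\bar\lambda^{X_d}_k\le\varepsilon^2\}$. *)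

theory Defs
  imports "HOL-Analysis.Analysis" "HOL-Library.Extended_Nat"
begin

text \<open>A covariance eigenvalue sequence (0-based: lam 0 is the largest eigenvalue
  lambda_1), listed with multiplicity in nonincreasing order, nonnegative,
  padded with zeros, with finite trace.\<close>
definition eig_seq :: "(nat \<Rightarrow> real) \<Rightarrow> bool" where
  "eig_seq lam \<longleftrightarrow> (\<forall>k. 0 \<le> lam k) \<and> decseq lam \<and> summable lam"

definition trace_eig :: "(nat \<Rightarrow> real) \<Rightarrow> real" where
  "trace_eig lam = (\<Sum>k. lam k)"

definition nlam :: "(nat \<Rightarrow> real) \<Rightarrow> nat \<Rightarrow> real" where
  "nlam lam k = lam k / trace_eig lam"

text \<open>Average case complexity n(eps) = min { n : sum_(k>n) nlam_k \<le> eps^2 }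
  (1-based tail sum over k > n = 0-based sum over k \<ge> n).\<close>
definition avg_complexity :: "(nat \<Rightarrow> real) \<Rightarrow> real \<Rightarrow> nat" where
  "avg_complexity lam eps = (LEAST n. (\<Sum>k. nlam lam (k + n)) \<le> eps\<^sup>2)"

end

theory Submission
  imports Defs
begin

lemma trace_pos:
  assumes "eig_seq l" "l 0 > 0"
  shows "trace_eig l > 0"
proof -
  have s: "summable l" and nn: "\<And>k. 0 \<le> l k" using assms(1) unfolding eig_seq_def by auto
  have "l 0 \<le> (\<Sum>k. l k)"
    using sum_le_suminf[OF s, of "{0}"] nn by auto
  then show ?thesis using assms(2) unfolding trace_eig_def by linarith
qed

lemma tail_eq:
  assumes "eig_seq l" "l 0 > 0"
  shows "(\<Sum>k. nlam l (k + n)) = 1 - (\<Sum>k<n. nlam l k)"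
proof -
  have s: "summable l" using assms(1) unfolding eig_seq_def by auto
  have T: "trace_eig l > 0" using trace_pos[OF assms] .
  have "(\<Sum>k. l (k + n)) = trace_eig l - (\<Sum>k<n. l k)"
    using suminf_split_initial_segment[OF s, of n] unfolding trace_eig_def by simp
  moreover have "(\<Sum>k. nlam l (k + n)) = (\<Sum>k. l (k + n)) / trace_eig l"
    unfolding nlam_def using suminf_divide[of "\<lambda>k. l (k + n)" "trace_eig l"] s summable_iff_shift[of l n] by simp
  moreover have "(\<Sum>k<n. nlam l k) = (\<Sum>k<n. l k) / trace_eig l"
    unfolding nlam_def by (simp add: sum_divide_distrib)
  ultimately show ?thesis using T by (simp add: diff_divide_distrib)
qed

lemma nlam_props:
  assumes "eig_seq l" "l 0 > 0"
  shows "0 \<le> nlam l k" "nlam l k \<le> nlam l 0" "nlam l 0 \<le> 1"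
proof -
  have s: "summable l" and nn: "\<And>k. 0 \<le> l k" and dec: "decseq l"
    using assms(1) unfolding eig_seq_def by auto
  have T: "trace_eig l > 0" using trace_pos[OF assms] .
  show "0 \<le> nlam l k" unfolding nlam_def using T nn[of k] by simp
  show "nlam l k \<le> nlam l 0" unfolding nlam_def using T dec
    by (simp add: decseq_def divide_right_mono)
  have "l 0 \<le> trace_eig l"
    using sum_le_suminf[OF s, of "{0}"] nn unfolding trace_eig_def by auto
  then show "nlam l 0 \<le> 1" unfolding nlam_def using T by simp
qed

lemma tail_exists:
  assumes "eig_seq l" "l 0 > 0" "eps > 0"
  shows "\<exists>n. (\<Sum>k. nlam l (k + n)) \<le> eps\<^sup>2"
proof -
  have s: "summable l" using assms(1) unfolding eig_seq_def by auto
  have "summable (nlam l)" unfolding nlam_def using s by (simp add: summable_divide)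
  from suminf_exist_split[OF _ this, of "eps^2"] assms(3) obtain N where
    "\<forall>n\<ge>N. norm (\<Sum>i. nlam l (i + n)) < eps^2" by auto
  then show ?thesis by (metis order.refl abs_le_D1 less_imp_le order.trans real_norm_def)
qed

theorem proposition2:
  fixes lam :: "nat \<Rightarrow> nat \<Rightarrow> real"
  assumes eig: "\<And>d. eig_seq (lam d)"
    and pos: "\<And>d. lam d 0 > 0"
  shows "(\<forall>eps. 0 < eps \<and> eps < 1 \<longrightarrow> (SUP d. enat (avg_complexity (lam d) eps)) = \<infinity>)
         \<longleftrightarrow> (INF d. nlam (lam d) 0) = 0"
proof -
  have bdd: "bdd_below (range (\<lambda>d. nlam (lam d) 0))"
    using nlam_props(1)[OF eig pos] by (intro bdd_belowI2[where m=0]) auto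
  define c where "c = (INF d. nlam (lam d) 0)"
  have c0: "c \<ge> 0" unfolding c_def
    by (rule cINF_greatest) (use nlam_props(1)[OF eig pos] in auto)
  have cle: "\<And>d. c \<le> nlam (lam d) 0" unfolding c_def by (rule cINF_lower[OF bdd]) simp
  have c1: "c \<le> 1" using cle[of 0] nlam_props(3)[OF eig pos, of 0] by linarith
  show ?thesis
  proof
    assume H: "\<forall>eps. 0 < eps \<and> eps < 1 \<longrightarrow> (SUP d. enat (avg_complexity (lam d) eps)) = \<infinity>"
    show "(INF d. nlam (lam d) 0) = 0"
    proof (rule ccontr)
      assume "(INF d. nlam (lam d) 0) \<noteq> 0"
      then have cp: "c > 0" using c0 c_def by auto
      define eps where "eps = sqrt (1 - c/2)"
      have e0: "0 < eps" "eps < 1" using cp c1 unfolding eps_def by auto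
      have e2: "eps\<^sup>2 = 1 - c/2" unfolding eps_def using c1 by simp
      have "\<And>d. avg_complexity (lam d) eps \<le> 1"
      proof -
        fix d
        have "(\<Sum>k. nlam (lam d) (k + 1)) = 1 - nlam (lam d) 0"
          using tail_eq[OF eig pos, of d 1] by simp
        also have "\<dots> \<le> eps\<^sup>2" using cle[of d] e2 cp by linarith
        finally show "avg_complexity (lam d) eps \<le> 1"
          unfolding avg_complexity_def by (rule Least_le)
      qed
      then have "(SUP d. enat (avg_complexity (lam d) eps)) \<le> enat 1"
        by (intro SUP_least) simp
      then show False using H e0 by auto
    qed
  next
    assume H: "(INF d. nlam (lam d) 0) = 0"
    show "\<forall>eps. 0 < eps \<and> eps < 1 \<longrightarrow> (SUP d. enat (avg_complexity (lam d) eps)) = \<infinity>"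
    proof (intro allI impI)
      fix eps :: real assume e: "0 < eps \<and> eps < 1"
      have e2: "eps\<^sup>2 < 1" using e by (simp add: power_less_one_iff abs_less_iff)
      show "(SUP d. enat (avg_complexity (lam d) eps)) = \<infinity>"
      proof (rule ccontr)
        assume "(SUP d. enat (avg_complexity (lam d) eps)) \<noteq> \<infinity>"
        then obtain m where m: "(SUP d. enat (avg_complexity (lam d) eps)) = enat m" by auto
        define del where "del = (1 - eps\<^sup>2) / real (m + 1)"
        have dp: "del > 0" unfolding del_def using e2 by simp
        then have "(INF d. nlam (lam d) 0) < del" using H by simp
        then obtain d where d: "nlam (lam d) 0 < del"
          using cINF_less_iff[OF _ bdd] by auto
        have notP: "\<not> (\<Sum>k. nlam (lam d) (k + n)) \<le> eps\<^sup>2" if "n \<le> m" for n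
        proof -
          have "(\<Sum>k<n. nlam (lam d) k) \<le> (\<Sum>k<n. nlam (lam d) 0)"
            by (rule sum_mono) (use nlam_props(2)[OF eig pos] in auto)
          also have "\<dots> = real n * nlam (lam d) 0" by simp
          also have "\<dots> \<le> real m * nlam (lam d) 0"
            using that nlam_props(1)[OF eig pos, of d 0] by (simp add: mult_right_mono)
          also have "\<dots> < real (m+1) * del"
          proof -
            have "real m * nlam (lam d) 0 \<le> real m * del"
              using d by (simp add: mult_left_mono)
            moreover have "nlam (lam d) 0 < del" by (rule d)
            ultimately show ?thesis using dp by (simp add: distrib_right)
          qed
          also have "\<dots> = 1 - eps\<^sup>2" unfolding del_def by simp
          finally show ?thesis using tail_eq[OF eig pos, of d n] by linarith
        qed
        obtain n0 where n0: "(\<Sum>k. nlam (lam d) (k + n0)) \<le> eps\<^sup>2"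
          using tail_exists[OF eig pos] e by blast
        have "(\<Sum>k. nlam (lam d) (k + avg_complexity (lam d) eps)) \<le> eps\<^sup>2"
          unfolding avg_complexity_def by (rule LeastI[of _ n0]) (rule n0)
        then have "avg_complexity (lam d) eps > m" using notP by (meson not_le)
        moreover have "enat (avg_complexity (lam d) eps) \<le> enat m"
          unfolding m[symmetric] by (rule SUP_upper) simp
        ultimately show False by simp
      qed
    qed
  qed
qed

end
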